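(* Let $(X,d)$ be a complete doubling metric space, $G\ge0$, and let $\mathrm T=(\mathcal T,\{x_I\},\{r_I\})$ satisfy (T1), (T2), (T'3), (T4), (T5) and (M1)–(M7) with respect to $G$, with exponent $s$. Then $s$ is the unique zero of the pressure function $t\mapsto p(-tf)$, where $f(\omega)=\log(1/\rho_\omega)$ is the function from (M6).
   Context: Words: $A_N=\{0,\dots,N-1\}$ ($N\ge2$), $\Sigma_N=A_N^{\mathbb N}$, shift $\sigma(\omega_1\omega_2\dots)=\omega_2\omega_3\dots$; for a finite word $I$, $\sigma^n(I)=I_{n+1}\cdots I_{|I|}$. For $\mathcal T\subseteq\Sigma_N$, $\mathcal T^*$ is the set of finite prefixes $\omega|_k$ ($k\ge0$) of elements of $\mathcal T$, $\mathcal T_k$ those of length $k$, $[I]=\{\omega\in\mathcal T:I\prec\omega\}$; $\prec$ prefix relation; $IJ$ concatenation; incomparable words differ at some position $\le$ the shorter length. $\mathcal T\cup\mathcal T^*\subseteq\Sigma_{N+1}$ via $I\mapsto I\,N\,N\cdots$, metric $2^{-(\text{common prefix length})}$; $\operatorname{var}_ng=\sup\{|g(\omega)-g(\tau)|:\omega|_n=\tau|_n\}$; $g$ Hölder if $\sup_n\operatorname{var}_n(g)/a^n<\infty$ for some $a\in(0,1)$. $S_ng=\sum_{k<n}g\circ\sigma^k$. $f,g$ cohomologous if $f-g=h\circ\sigma-h$, $h$ continuous; $f$ lattice if cohomologous to a function valued in a proper closed subgroup of $\mathbb R$, non-lattice otherwise. Pressure of continuous $g:\mathcal T\to\mathbb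 R$: $p(g)=\lim_{n\to\infty}\frac1n\log\sum_{I\in\mathcal T_n}\exp\big(\sup_{\omega\in[I]}S_ng(\omega)\big)$. Tree conditions (constants $\rho,C,D,E>0$): (T1) $d(x_I,x_J)\ge C(r_I+r_J)$ for incomparable $I,J$; (T2) $\operatorname{diam}\{x_{IJ}:IJ\in\mathcal T^*\}\le Dr_I$; (T'3) for all $I$, $n\ge0$ and every $\mathcal I\subseteq\bigcup_{k\ge n}\mathcal T_k$ such that each $\omega\in\mathcal T$ has exactly one prefix in $\mathcal I$ and some element of $\mathcal I$ extends $I$: $\frac1Er_I^s\le\sum_{IJ\in\mathcal I}r_{IJ}^s\le Er_I^s$; (T4) $r_I\to0$ as $|I|\to\infty$; (T5) $r_{Ij}\ge\rho r_I$. Generated set $K=\{x_\omega\}$, $x_\omega=\lim_nx_{\omega|_n}$; $K_I=\{x_\omega\in K:I\prec\omega\}$; $A_r=\{x:\operatorname{dist}(x,A)\le r\}$. (M1)–(M7) w.r.t. $G\ge0$ (all words in $\mathcal T^*$): (M1) $\mathcal T=\{\omega:A_{\omega_n\omega_{n+1}}=1\ \forall n\}$, $A\in\{0,1\}^{N\times N}$ irreducible aperiodic. (M2) $\{x_I\}\subseteq K$. (M3) $r_{Ii}\le Rr_I$ for some $0<R<1$. (M4) bi-Lipschitz $\varphi_i:X\to X$ and $W,\delta_0>0$ with $\varphi_I=\varphi_{I_1}\circ\dots\circ\varphi_{I_{|I|}}$, $\varphi_\varnothing=\mathrm{id}$, $\varphi_I(K_J)=K_{IJ}$ and $(K_I)_{r_IWG\delta}\subseteq\varphi_I(K_{G\delta})$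 for $\delta\le\delta_0$. (M5) for fixed $\xi\in(0,\delta_0)$, $\kappa^\mp_{i,J}$ are the optimal constants with $\kappa^-_{i,J}\frac{r_{iJ}}{r_J}d(x,y)\le d(\varphi_ix,\varphi_iy)\le\kappa^+_{i,J}\frac{r_{iJ}}{r_J}d(x,y)$ on $\varphi_J(K_{G\xi})$, $\kappa^\pm_{I,J}=\prod_{n=1}^{|I|}\kappa^\pm_{I_n,\sigma^n(I)J}$, and $\kappa^\pm_{I,J}\to1$ as $|J|\to\infty$ uniformly in $I$. (M6) with $f_1(iJ)=\log\frac{r_J}{r_{iJ}\kappa^+_{i,J}}$, $f_2(iJ)=\log\frac{r_J}{r_{iJ}\kappa^-_{i,J}}$, $f_1(\varnothing)=f_2(\varnothing)=0$: $r_{i\omega|_n}/r_{\omega|_n}\to\rho_{i\omega}\in(0,1)$, $\omega\mapsto\rho_\omega$ continuous on $\mathcal T$, and Hölder extensions $\tilde f_1,\tilde f_2$ of $f_1,f_2$ to $\mathcal T\cup\mathcal T^*$ exist with $\tilde f_1=\tilde f_2=\log(1/\rho_\omega)=:f(\omega)$ on $\mathcal T$. (M7) $f$ is non-lattice. *)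

theory Defs
  imports "HOL-Analysis.Analysis" "HOL-Library.Sublist"
begin

text \<open>Infinite words are sequences nat => nat (index 0 is the first letter);
  finite words are lists of naturals.\<close>

type_synonym word = "nat list"
type_synonym seq = "nat \<Rightarrow> nat"

definition Sigma_N :: "nat \<Rightarrow> seq set" where
  "Sigma_N N = {\<omega>. \<forall>n. \<omega> n < N}"

definition shift :: "seq \<Rightarrow> seq" where
  "shift \<omega> = (\<lambda>n. \<omega> (Suc n))"

definition seqcons :: "nat \<Rightarrow> seq \<Rightarrow> seq" where
  "seqcons i \<omega> = case_nat i \<omega>"

definition pref :: "seq \<Rightarrow> nat \<Rightarrow> word" where
  "pref \<omega> k = map \<omega> [0..<k]"

definition words :: "seq set \<Rightarrow> word set" where
  "words T = {pref \<omega> k | \<omega> k. \<omega> \<in> T}"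

definition words_len :: "seq set \<Rightarrow> nat \<Rightarrow> word set" where
  "words_len T k = {pref \<omega> k | \<omega>. \<omega> \<in> T}"

definition cyl :: "seq set \<Rightarrow> word \<Rightarrow> seq set" where
  "cyl T I = {\<omega> \<in> T. pref \<omega> (length I) = I}"

text \<open>embedding of finite words into Sigma_{N+1}: I \<mapsto> I N N N ...\<close>
definition emb :: "nat \<Rightarrow> word \<Rightarrow> seq" where
  "emb N I = (\<lambda>n. if n < length I then I ! n else N)"

text \<open>Hoelder continuity w.r.t. the metric 2^(-common prefix length):
  var_n g <= C a^n for some 0<a<1\<close>
definition holder_on :: "seq set \<Rightarrow> (seq \<Rightarrow> real) \<Rightarrow> bool" where
  "holder_on D g \<longleftrightarrow> (\<exists>a C. 0 < a \<and> a < 1 \<and>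
     (\<forall>n. \<forall>\<omega>\<in>D. \<forall>\<tau>\<in>D. (\<forall>k<n. \<omega> k = \<tau> k) \<longrightarrow> \<bar>g \<omega> - g \<tau>\<bar> \<le> C * a ^ n))"

text \<open>continuity on T w.r.t. the metric 2^(-common prefix length)\<close>
definition cont_T :: "seq set \<Rightarrow> (seq \<Rightarrow> real) \<Rightarrow> bool" where
  "cont_T T h \<longleftrightarrow> (\<forall>\<omega>\<in>T. \<forall>e>0. \<exists>n. \<forall>\<tau>\<in>T. (\<forall>k<n. \<omega> k = \<tau> k) \<longrightarrow> \<bar>h \<tau> - h \<omega>\<bar> < e)"

fun mpow :: "nat \<Rightarrow> (nat \<Rightarrow> nat \<Rightarrow> nat) \<Rightarrow> nat \<Rightarrow> nat \<Rightarrow> nat \<Rightarrow> nat" where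
  "mpow N A 0 i j = (if i = j then 1 else 0)"
| "mpow N A (Suc k) i j = (\<Sum>l<N. mpow N A k i l * A l j)"

definition irreducible_mat :: "nat \<Rightarrow> (nat \<Rightarrow> nat \<Rightarrow> nat) \<Rightarrow> bool" where
  "irreducible_mat N A \<longleftrightarrow> (\<forall>i<N. \<forall>j<N. \<exists>k>0. mpow N A k i j > 0)"

definition aperiodic_mat :: "nat \<Rightarrow> (nat \<Rightarrow> nat \<Rightarrow> nat) \<Rightarrow> bool" where
  "aperiodic_mat N A \<longleftrightarrow> (\<forall>i<N. Gcd {k. k > 0 \<and> mpow N A k i i > 0} = 1)"

definition doubling :: "'a::metric_space set \<Rightarrow> bool" where
  "doubling X \<longleftrightarrow> (\<exists>M::nat. \<forall>x\<in>X. \<forall>r>0. \<exists>F. finite F \<and> card F \<le> M \<and> F \<subseteq> X \<and>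
      ball x r \<inter> X \<subseteq> (\<Union>y\<in>F. ball y (r / 2)))"

definition bilipschitz :: "('a::metric_space \<Rightarrow> 'a) \<Rightarrow> bool" where
  "bilipschitz g \<longleftrightarrow> (\<exists>L\<ge>1. \<forall>x y. dist x y \<le> L * dist (g x) (g y) \<and> dist (g x) (g y) \<le> L * dist x y)"

fun phiw :: "(nat \<Rightarrow> 'a \<Rightarrow> 'a) \<Rightarrow> word \<Rightarrow> 'a \<Rightarrow> 'a" where
  "phiw \<phi> [] = id"
| "phiw \<phi> (i # I) = \<phi> i \<circ> phiw \<phi> I"

definition limpt :: "(word \<Rightarrow> 'a::metric_space) \<Rightarrow> seq \<Rightarrow> 'a" where
  "limpt x \<omega> = lim (\<lambda>n. x (pref \<omega> n))"

definition Kset :: "seq set \<Rightarrow> (word \<Rightarrow> 'a::metric_space) \<Rightarrow> word \<Rightarrow> 'a set" where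
  "Kset T x I = limpt x ` cyl T I"

definition nbhd :: "'a::metric_space set \<Rightarrow> real \<Rightarrow> 'a set" where
  "nbhd A r = {y. A \<noteq> {} \<and> infdist y A \<le> r}"

definition kap_plus :: "(nat \<Rightarrow> 'a::metric_space \<Rightarrow> 'a) \<Rightarrow> (word \<Rightarrow> real) \<Rightarrow> 'a set \<Rightarrow> nat \<Rightarrow> word \<Rightarrow> real" where
  "kap_plus \<phi> r S i J = Sup {dist (\<phi> i a) (\<phi> i b) * r J / (r (i # J) * dist a b) | a b.
       a \<in> phiw \<phi> J ` S \<and> b \<in> phiw \<phi> J ` S \<and> a \<noteq> b}"

definition kap_minus :: "(nat \<Rightarrow> 'a::metric_space \<Rightarrow> 'a) \<Rightarrow> (word \<Rightarrow> real) \<Rightarrow> 'a set \<Rightarrow> nat \<Rightarrow> word \<Rightarrow> real" where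
  "kap_minus \<phi> r S i J = Inf {dist (\<phi> i a) (\<phi> i b) * r J / (r (i # J) * dist a b) | a b.
       a \<in> phiw \<phi> J ` S \<and> b \<in> phiw \<phi> J ` S \<and> a \<noteq> b}"

definition kapW :: "(nat \<Rightarrow> word \<Rightarrow> real) \<Rightarrow> word \<Rightarrow> word \<Rightarrow> real" where
  "kapW k I J = (\<Prod>n\<in>{1..length I}. k (I ! (n - 1)) (drop n I @ J))"

definition fword :: "(nat \<Rightarrow> word \<Rightarrow> real) \<Rightarrow> (word \<Rightarrow> real) \<Rightarrow> word \<Rightarrow> real" where
  "fword k r I = (case I of [] \<Rightarrow> 0 | i # J \<Rightarrow> ln (r J / (r (i # J) * k i J)))"

definition proper_closed_subgroup :: "real set \<Rightarrow> bool" where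
  "proper_closed_subgroup H \<longleftrightarrow> closed H \<and> 0 \<in> H \<and> (\<forall>a\<in>H. \<forall>b\<in>H. a - b \<in> H) \<and> H \<noteq> UNIV"

definition lattice_fun :: "seq set \<Rightarrow> (seq \<Rightarrow> real) \<Rightarrow> bool" where
  "lattice_fun T f \<longleftrightarrow> (\<exists>h g H. cont_T T h \<and> proper_closed_subgroup H \<and>
      (\<forall>\<omega>\<in>T. g \<omega> \<in> H \<and> f \<omega> - g \<omega> = h (shift \<omega>) - h \<omega>))"

definition birkhoff :: "(seq \<Rightarrow> real) \<Rightarrow> nat \<Rightarrow> seq \<Rightarrow> real" where
  "birkhoff g n \<omega> = (\<Sum>k<n. g ((shift ^^ k) \<omega>))"

definition pressure :: "seq set \<Rightarrow> (seq \<Rightarrow> real) \<Rightarrow> real" where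
  "pressure T g = lim (\<lambda>n. ln (\<Sum>I\<in>words_len T n. exp (SUP \<omega>\<in>cyl T I. birkhoff g n \<omega>)) / real n)"

end

theory Submission
  imports Defs "HOL-Analysis.Analysis" "HOL-Library.Sublist"
begin


lemma pref_length[simp]: "length (pref \<omega> k) = k"
  by (simp add: pref_def)

lemma pref_nth[simp]: "k < n \<Longrightarrow> pref \<omega> n ! k = \<omega> k"
  by (simp add: pref_def)

lemma pref_0[simp]: "pref \<omega> 0 = []"
  by (simp add: pref_def)

lemma pref_Suc: "pref \<omega> (Suc j) = \<omega> 0 # pref (shift \<omega>) j"
  by (rule nth_equalityI) (auto simp: shift_def nth_Cons split: nat.split)

lemma funpow_shift: "(shift ^^ n) \<omega> k = \<omega> (n + k)"
  by (induction n arbitrary: \<omega>) (auto simp: shift_def funpow_Suc_right simp del: funpow.simps)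

lemma take_pref: "n \<le> m \<Longrightarrow> take n (pref \<omega> m) = pref \<omega> n"
  by (rule nth_equalityI) auto

lemma drop_pref: "drop n (pref \<omega> (n + m)) = pref ((shift ^^ n) \<omega>) m"
  by (rule nth_equalityI) (auto simp: funpow_shift)

lemma pref_words: "\<omega> \<in> T \<Longrightarrow> pref \<omega> k \<in> words T"
  unfolding words_def by blast

lemma pref_words_len: "\<omega> \<in> T \<Longrightarrow> pref \<omega> k \<in> words_len T k"
  unfolding words_len_def by blast

lemma words_len_sub: "words_len T n \<subseteq> words T"
  unfolding words_len_def words_def by blast

lemma words_len_length: "I \<in> words_len T n \<Longrightarrow> length I = n"
  unfolding words_len_def by auto

lemma words_len_finite:
  assumes "T \<subseteq> Sigma_N N" shows "finite (words_len T n)"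
proof -
  have "words_len T n \<subseteq> {xs. set xs \<subseteq> {..<N} \<and> length xs = n}"
    using assms unfolding words_len_def Sigma_N_def pref_def by fastforce
  moreover have "finite {xs. set xs \<subseteq> {..<N} \<and> length xs = n}"
    by (rule finite_lists_length_eq) simp
  ultimately show ?thesis by (rule finite_subset)
qed

lemma words_snoc: "I @ [j] \<in> words T \<Longrightarrow> I \<in> words T"
proof -
  assume "I @ [j] \<in> words T"
  then obtain \<omega> k where w: "\<omega> \<in> T" "I @ [j] = pref \<omega> k" unfolding words_def by blast
  then have "I = take (length I) (pref \<omega> k)" by (metis append_eq_conv_conj)
  also have "\<dots> = pref \<omega> (length I)" using w by (intro take_pref) (metis length_append_singleton pref_length le_SucI order_refl)
  finally show ?thesis using w pref_words by metis
qed

lemma words_Cons: "(\<forall>\<omega>\<in>T. shift \<omega> \<in> T) \<Longrightarrow> i # J \<in> words T \<Longrightarrow> J \<in> words T"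
proof -
  assume sh: "\<forall>\<omega>\<in>T. shift \<omega> \<in> T" and "i # J \<in> words T"
  then obtain \<omega> k where w: "\<omega> \<in> T" "i # J = pref \<omega> k" unfolding words_def by blast
  then obtain j where k: "k = Suc j" by (cases k) auto
  then have "J = pref (shift \<omega>) j" using w pref_Suc by simp
  then show ?thesis using sh w pref_words by metis
qed

lemma cyl_pref: "\<omega> \<in> T \<Longrightarrow> \<omega> \<in> cyl T (pref \<omega> n)"
  unfolding cyl_def by simp

lemma r_bounds:
  fixes r :: "word \<Rightarrow> real" and \<rho>0 R :: real
  assumes rpos: "\<forall>I\<in>words T. r I > 0"
    and T5: "\<forall>I j. I @ [j] \<in> words T \<longrightarrow> r (I @ [j]) \<ge> \<rho>0 * r I"
    and M3: "\<forall>I i. I @ [i] \<in> words T \<longrightarrow> r (I @ [i]) \<le> R * r I"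
    and rho0: "\<rho>0 > 0" and R: "R > 0"
  shows "I \<in> words T \<Longrightarrow> \<rho>0 ^ length I * r [] \<le> r I \<and> r I \<le> R ^ length I * r []"
proof (induction I rule: rev_induct)
  case Nil then show ?case by auto
next
  case (snoc j I)
  then have IH: "\<rho>0 ^ length I * r [] \<le> r I \<and> r I \<le> R ^ length I * r []"
    using words_snoc by blast
  have a: "r (I @ [j]) \<ge> \<rho>0 * r I" "r (I @ [j]) \<le> R * r I" using snoc.prems T5 M3 by auto
  have "\<rho>0 ^ length (I @ [j]) * r [] = \<rho>0 * (\<rho>0 ^ length I * r [])" by simp
  also have "\<dots> \<le> \<rho>0 * r I" using IH rho0 by (intro mult_left_mono) auto
  finally have 1: "\<rho>0 ^ length (I @ [j]) * r [] \<le> r (I @ [j])" using a by linarith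
  have "R * r I \<le> R * (R ^ length I * r [])" using IH R by (intro mult_left_mono) auto
  then have 2: "r (I @ [j]) \<le> R ^ length (I @ [j]) * r []" using a by simp
  show ?case using 1 2 by blast
qed



lemma subadd_mult:
  fixes a :: "nat \<Rightarrow> real"
  assumes sub: "\<And>n m. a (n + m) \<le> a n + a m"
  shows "a (q * k + r) \<le> real q * a k + a r"
proof (induction q)
  case 0 then show ?case by simp
next
  case (Suc q)
  have "a (Suc q * k + r) = a (k + (q * k + r))" by (simp add: algebra_simps)
  also have "\<dots> \<le> a k + a (q * k + r)" by (rule sub)
  also have "\<dots> \<le> a k + (real q * a k + a r)" using Suc by simp
  finally show ?case by (simp add: algebra_simps)
qed

lemma fekete:
  fixes a :: "nat \<Rightarrow> real"
  assumes sub: "\<And>n m. a (n + m) \<le> a n + a m"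
    and low: "\<And>n. n \<ge> 1 \<Longrightarrow> a n \<ge> c * real n"
  shows "convergent (\<lambda>n. a n / real n)"
proof -
  define S where "S = (\<lambda>n. a n / real n) ` {1..}"
  define L where "L = Inf S"
  have bdd: "bdd_below S" unfolding S_def bdd_below_def using low
    by (auto intro!: exI[of _ c] simp: field_simps)
  have Sne: "S \<noteq> {}" unfolding S_def by auto
  have lowL: "a n / real n \<ge> L" if "n \<ge> 1" for n
    unfolding L_def using bdd that by (intro cInf_lower) (auto simp: S_def)
  have "(\<lambda>n. a n / real n) \<longlonglongrightarrow> L"
  proof (rule LIMSEQ_I)
    fix e :: real assume e: "e > 0"
    have "Inf S < L + e / 2" using e by (simp add: L_def)
    then obtain y where "y \<in> S" "y < L + e/2" using cInf_lessD[OF Sne] by blast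
    then obtain k where k: "k \<ge> 1" "a k / real k < L + e/2" unfolding S_def by auto
    define C0 where "C0 = \<bar>a k\<bar> + (\<Sum>j<k. \<bar>a j\<bar>)"
    have C0: "C0 \<ge> 0" unfolding C0_def by (simp add: sum_nonneg)
    have upper: "a n \<le> real n * (a k / real k) + C0" for n
    proof -
      define q r where "q = n div k" "r = n mod k"
      have n: "n = q * k + r" unfolding q_r_def by simp
      have rk: "r < k" unfolding q_r_def using k by simp
      have 1: "a n \<le> real q * a k + a r" using subadd_mult[OF sub] n by simp
      have "\<bar>a r\<bar> \<le> (\<Sum>j<k. \<bar>a j\<bar>)"
        using rk by (intro member_le_sum) auto
      then have 2: "a r \<le> (\<Sum>j<k. \<bar>a j\<bar>)" by linarith
      have "real n * (a k / real k) = real q * a k + real r * (a k / real k)"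
        using k by (simp add: n field_simps)
      moreover have "\<bar>real r * (a k / real k)\<bar> \<le> \<bar>a k\<bar>"
      proof -
        have "\<bar>real r * (a k / real k)\<bar> = (real r / real k) * \<bar>a k\<bar>"
          using k by (simp add: abs_mult)
        also have "\<dots> \<le> 1 * \<bar>a k\<bar>" using rk by (intro mult_right_mono) auto
        finally show ?thesis by simp
      qed
      ultimately show ?thesis using 1 2 unfolding C0_def by linarith
    qed
    obtain M where M: "real M > 2 * C0 / e" using reals_Archimedean2 by blast
    show "\<exists>no. \<forall>n\<ge>no. norm (a n / real n - L) < e"
    proof (intro exI[of _ "M + 1"] allI impI)
      fix n assume n: "n \<ge> M + 1"
      then have n1: "n \<ge> 1" and npos: "real n > 0" by auto
      have "C0 / real n < e / 2"
      proof -
        have "2 * C0 / e < real n" using M n by linarith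
        then have "2 * C0 < real n * e" using e by (simp add: field_simps)
        then show ?thesis using npos by (simp add: field_simps)
      qed
      moreover have "a n / real n \<le> a k / real k + C0 / real n"
        using upper[of n] npos by (simp add: field_simps)
      ultimately have "a n / real n < L + e" using k by linarith
      moreover have "a n / real n \<ge> L" using lowL n1 by blast
      ultimately show "norm (a n / real n - L) < e" by simp
    qed
  qed
  then show ?thesis unfolding convergent_def by blast
qed



locale setting =
  fixes T :: "seq set" and N :: nat and r :: "word \<Rightarrow> real" and \<rho>0 R :: real
    and f :: "seq \<Rightarrow> real" and kp :: "nat \<Rightarrow> word \<Rightarrow> real" and g1 :: "seq \<Rightarrow> real"
  assumes sub: "T \<subseteq> Sigma_N N"
    and shiftT: "\<forall>\<omega>\<in>T. shift \<omega> \<in> T"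
    and ne: "T \<noteq> {}"
    and rpos: "\<forall>I\<in>words T. r I > 0"
    and T5: "\<forall>I j. I @ [j] \<in> words T \<longrightarrow> r (I @ [j]) \<ge> \<rho>0 * r I"
    and M3: "0 < R" "R < 1" "\<forall>I i. I @ [i] \<in> words T \<longrightarrow> r (I @ [i]) \<le> R * r I"
    and rho0: "\<rho>0 > 0"
    and hol: "holder_on (T \<union> emb N ` words T) g1"
    and g1w: "\<forall>I\<in>words T. g1 (emb N I) = fword kp r I"
    and g1T: "\<forall>\<omega>\<in>T. g1 \<omega> = f \<omega>"
    and M5: "\<forall>e>0. \<exists>m. \<forall>I J. I @ J \<in> words T \<and> length J \<ge> m \<longrightarrow> \<bar>kapW kp I J - 1\<bar> < e"
begin

definition ee :: "seq \<Rightarrow> nat \<Rightarrow> real" where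
  "ee \<omega> j = ln (r (pref \<omega> (Suc j))) - ln (r (pref (shift \<omega>) j)) + f \<omega>"

lemma nil_words: "[] \<in> words T"
  using ne pref_words[of _ T 0] by auto

lemma holder_obt: obtains a Ch where "0 < a" "a < 1" "Ch \<ge> 0"
  "\<And>n \<omega> \<tau>. \<omega> \<in> T \<union> emb N ` words T \<Longrightarrow> \<tau> \<in> T \<union> emb N ` words T \<Longrightarrow> (\<forall>k<n. \<omega> k = \<tau> k)
     \<Longrightarrow> \<bar>g1 \<omega> - g1 \<tau>\<bar> \<le> Ch * a ^ n"
proof -
  obtain a Ch where h: "0 < a" "a < 1" "\<forall>n. \<forall>\<omega>\<in>T \<union> emb N ` words T. \<forall>\<tau>\<in>T \<union> emb N ` words T.
     (\<forall>k<n. \<omega> k = \<tau> k) \<longrightarrow> \<bar>g1 \<omega> - g1 \<tau>\<bar> \<le> Ch * a ^ n"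
    using hol unfolding holder_on_def by blast
  obtain \<omega> where "\<omega> \<in> T" using ne by blast
  then have "\<bar>g1 \<omega> - g1 \<omega>\<bar> \<le> Ch * a ^ 0" using h(3) by blast
  then have C0: "Ch \<ge> 0" by simp
  show ?thesis
  proof (rule that[OF h(1) h(2) C0])
    fix n \<omega> \<tau> assume "\<omega> \<in> T \<union> emb N ` words T" "\<tau> \<in> T \<union> emb N ` words T" "\<forall>k<n. \<omega> k = \<tau> k"
    then show "\<bar>g1 \<omega> - g1 \<tau>\<bar> \<le> Ch * a ^ n" using h(3) by simp
  qed
qed

lemma f_bound: obtains Ch where "Ch \<ge> 0" "\<And>\<omega>. \<omega> \<in> T \<Longrightarrow> \<bar>f \<omega>\<bar> \<le> Ch"
proof -
  obtain a Ch where h: "0 < a" "a < 1" "Ch \<ge> 0"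
    "\<And>n \<omega> \<tau>. \<omega> \<in> T \<union> emb N ` words T \<Longrightarrow> \<tau> \<in> T \<union> emb N ` words T \<Longrightarrow> (\<forall>k<n. \<omega> k = \<tau> k)
     \<Longrightarrow> \<bar>g1 \<omega> - g1 \<tau>\<bar> \<le> Ch * a ^ n" by (rule holder_obt) (rule that; assumption)
  have "\<bar>f \<omega>\<bar> \<le> Ch" if "\<omega> \<in> T" for \<omega>
  proof -
    have "\<bar>g1 \<omega> - g1 (emb N [])\<bar> \<le> Ch * a ^ 0"
      using that nil_words by (intro h(4)) auto
    moreover have "g1 (emb N []) = 0" using g1w nil_words by (simp add: fword_def)
    ultimately show ?thesis using g1T that by simp
  qed
  then show ?thesis by (rule that[OF h(3)])
qed

lemma rb: "I \<in> words T \<Longrightarrow> \<rho>0 ^ length I * r [] \<le> r I \<and> r I \<le> R ^ length I * r []"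
  using r_bounds[OF rpos T5 M3(3) rho0 M3(1)] by blast

lemma ln_r_bound:
  assumes "I \<in> words T"
  shows "\<bar>ln (r I) - ln (r [])\<bar> \<le> real (length I) * (\<bar>ln \<rho>0\<bar> + \<bar>ln R\<bar>)"
proof -
  have r0: "r [] > 0" using rpos nil_words by blast
  have rI: "r I > 0" using rpos assms by blast
  have b: "\<rho>0 ^ length I * r [] \<le> r I" "r I \<le> R ^ length I * r []" using rb[OF assms] by auto
  have "ln (\<rho>0 ^ length I * r []) \<le> ln (r I)" using b r0 rho0 rI by (subst ln_le_cancel_iff) auto
  then have 1: "real (length I) * ln \<rho>0 + ln (r []) \<le> ln (r I)" using r0 rho0 by (simp add: ln_mult ln_realpow)
  have "ln (r I) \<le> ln (R ^ length I * r [])" using b rI by (subst ln_le_cancel_iff) auto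
  then have 2: "ln (r I) \<le> real (length I) * ln R + ln (r [])" using r0 M3 by (simp add: ln_mult ln_realpow)
  have "real (length I) * (- \<bar>ln \<rho>0\<bar>) \<le> real (length I) * ln \<rho>0"
    by (intro mult_left_mono) auto
  then have 3: "- (real (length I) * \<bar>ln \<rho>0\<bar>) \<le> real (length I) * ln \<rho>0" by simp
  have 4: "real (length I) * ln R \<le> real (length I) * \<bar>ln R\<bar>"
    by (intro mult_left_mono) auto
  have 5: "real (length I) * \<bar>ln \<rho>0\<bar> \<ge> 0" "real (length I) * \<bar>ln R\<bar> \<ge> 0" by auto
  have e: "real (length I) * (\<bar>ln \<rho>0\<bar> + \<bar>ln R\<bar>) = real (length I) * \<bar>ln \<rho>0\<bar> + real (length I) * \<bar>ln R\<bar>"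
    by (simp add: distrib_left)
  show ?thesis unfolding abs_le_iff e using 1 2 3 4 5 by linarith
qed

lemma ee_bound:
  obtains B where "B \<ge> 0" "\<And>\<omega> j. \<omega> \<in> T \<Longrightarrow> \<bar>ee \<omega> j\<bar> \<le> real (2 * j + 1) * B + B"
proof -
  obtain Ch where Ch: "Ch \<ge> 0" "\<And>\<omega>. \<omega> \<in> T \<Longrightarrow> \<bar>f \<omega>\<bar> \<le> Ch" by (rule f_bound) (rule that; assumption)
  define B where "B = \<bar>ln \<rho>0\<bar> + \<bar>ln R\<bar> + Ch"
  have "\<bar>ee \<omega> j\<bar> \<le> real (2 * j + 1) * B + B" if w: "\<omega> \<in> T" for \<omega> j
  proof -
    have 1: "\<bar>ln (r (pref \<omega> (Suc j))) - ln (r [])\<bar> \<le> real (Suc j) * (\<bar>ln \<rho>0\<bar> + \<bar>ln R\<bar>)"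
      using ln_r_bound[OF pref_words[OF w, of "Suc j"]] by simp
    have 2: "\<bar>ln (r (pref (shift \<omega>) j)) - ln (r [])\<bar> \<le> real j * (\<bar>ln \<rho>0\<bar> + \<bar>ln R\<bar>)"
      using ln_r_bound[OF pref_words] shiftT w by fastforce
    have 3: "\<bar>f \<omega>\<bar> \<le> Ch" using Ch w by blast
    have "\<bar>ee \<omega> j\<bar> \<le> real (Suc j) * (\<bar>ln \<rho>0\<bar> + \<bar>ln R\<bar>) + real j * (\<bar>ln \<rho>0\<bar> + \<bar>ln R\<bar>) + Ch"
      unfolding ee_def using 1 2 3 by linarith
    also have "\<dots> \<le> real (2 * j + 1) * B + B"
      unfolding B_def using Ch by (simp add: algebra_simps)
    finally show ?thesis .
  qed
  moreover have "B \<ge> 0" unfolding B_def using Ch by simp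
  ultimately show ?thesis using that by blast
qed

lemma ln_near1: fixes x :: real assumes "\<bar>x - 1\<bar> \<le> 1/2" shows "\<bar>ln x\<bar> \<le> 2 * \<bar>x - 1\<bar>"
proof -
  have x: "x > 0" "x \<ge> 1/2" using assms unfolding abs_le_iff by linarith+
  have 1: "ln x \<le> x - 1" using x ln_le_minus_one by blast
  have "ln (1/x) \<le> 1/x - 1" using x ln_le_minus_one by simp
  then have "- ln x \<le> (1 - x) / x" using x by (simp add: ln_div field_simps)
  also have "\<dots> \<le> 2 * \<bar>x - 1\<bar>"
  proof (cases "x \<le> 1")
    case True
    then have "(1 - x) / x \<le> (1 - x) / (1/2)" using x by (intro divide_left_mono) auto
    then show ?thesis using True by simp
  next
    case False then have "(1 - x) / x \<le> 0" using x by (simp add: divide_nonpos_pos)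
    moreover have "0 \<le> 2 * \<bar>x - 1\<bar>" by simp
    ultimately show ?thesis by linarith
  qed
  finally have 2: "- ln x \<le> 2 * \<bar>x - 1\<bar>" .
  have "x - 1 \<le> 2 * \<bar>x - 1\<bar>" by (cases "x \<ge> 1") auto
  then show ?thesis using 1 2 unfolding abs_le_iff by linarith
qed

lemma ee_small:
  assumes eps: "\<epsilon> > 0"
  obtains L where "\<And>\<omega> j. \<omega> \<in> T \<Longrightarrow> j \<ge> L \<Longrightarrow> \<bar>ee \<omega> j\<bar> \<le> \<epsilon>"
proof -
  obtain a Ch where h: "0 < a" "a < 1" "Ch \<ge> 0"
    "\<And>n \<omega> \<tau>. \<omega> \<in> T \<union> emb N ` words T \<Longrightarrow> \<tau> \<in> T \<union> emb N ` words T \<Longrightarrow> (\<forall>k<n. \<omega> k = \<tau> k)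
     \<Longrightarrow> \<bar>g1 \<omega> - g1 \<tau>\<bar> \<le> Ch * a ^ n" by (rule holder_obt) (rule that; assumption)
  define e0 where "e0 = min (1/2) (\<epsilon>/4)"
  have e0: "e0 > 0" "e0 \<le> 1/2" "e0 \<le> \<epsilon>/4" using eps by (auto simp: e0_def)
  obtain m where m: "\<And>I J. I @ J \<in> words T \<Longrightarrow> length J \<ge> m \<Longrightarrow> \<bar>kapW kp I J - 1\<bar> < e0"
    using M5 e0(1) by blast
  have "(\<lambda>n. Ch * a ^ n) \<longlonglongrightarrow> Ch * 0"
    using h by (intro tendsto_mult tendsto_const LIMSEQ_power_zero) auto
  then have "eventually (\<lambda>n. Ch * a ^ n < \<epsilon>/2) sequentially"
    using eps by (intro order_tendstoD) auto
  then obtain L2 where L2: "Ch * a ^ L2 < \<epsilon>/2" unfolding eventually_sequentially by blast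
  define L where "L = max m L2"
  have "\<bar>ee \<omega> j\<bar> \<le> \<epsilon>" if w: "\<omega> \<in> T" and j: "j \<ge> L" for \<omega> j
  proof -
    define i J where "i = \<omega> 0" "J = pref (shift \<omega>) j"
    have iJ: "pref \<omega> (Suc j) = i # J" unfolding i_J_def by (rule pref_Suc)
    have iJw: "i # J \<in> words T" using iJ pref_words[OF w] by metis
    have Jw: "J \<in> words T" unfolding i_J_def using shiftT w pref_words by blast
    have lenJ: "length J = j" unfolding i_J_def by simp
    have "kapW kp [i] J = kp i J" unfolding kapW_def by simp
    moreover have "\<bar>kapW kp [i] J - 1\<bar> < e0" using m[of "[i]" J] iJw lenJ j unfolding L_def by simp
    ultimately have kp: "\<bar>kp i J - 1\<bar> < e0" by simp
    then have kppos: "kp i J > 0" using e0 by linarith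
    have lnkp: "\<bar>ln (kp i J)\<bar> \<le> \<epsilon>/2" proof -
      have "\<bar>ln (kp i J)\<bar> \<le> 2 * \<bar>kp i J - 1\<bar>" using ln_near1[of "kp i J"] kp e0 by linarith
      moreover have "2 * \<bar>kp i J - 1\<bar> \<le> 2 * e0" using kp by simp
      moreover have "2 * e0 \<le> \<epsilon> / 2" using e0(3) by linarith
      ultimately show ?thesis by linarith
    qed
    have agree: "\<forall>k<Suc j. emb N (i # J) k = \<omega> k"
    proof (intro allI impI)
      fix k assume k: "k < Suc j"
      have "emb N (i # J) k = (i # J) ! k" using k lenJ by (simp add: emb_def)
      also have "\<dots> = pref \<omega> (Suc j) ! k" using iJ by simp
      also have "\<dots> = \<omega> k" using k by simp
      finally show "emb N (i # J) k = \<omega> k" .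
    qed
    have "\<bar>g1 (emb N (i # J)) - g1 \<omega>\<bar> \<le> Ch * a ^ Suc j"
      using w iJw agree by (intro h(4)) auto
    also have "\<dots> \<le> Ch * a ^ L2"
      using h j unfolding L_def by (intro mult_left_mono power_decreasing) auto
    finally have hol1: "\<bar>fword kp r (i # J) - f \<omega>\<bar> \<le> \<epsilon>/2"
      using g1w g1T iJw w L2 by auto
    have rJ: "r J > 0" "r (i # J) > 0" using rpos Jw iJw by auto
    have "fword kp r (i # J) = ln (r J) - ln (r (i # J)) - ln (kp i J)"
      using rJ kppos by (simp add: fword_def ln_div ln_mult)
    then have "ee \<omega> j = f \<omega> - fword kp r (i # J) - ln (kp i J)"
      unfolding ee_def using iJ i_J_def by simp
    then show ?thesis using hol1 lnkp by linarith
  qed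
  then show ?thesis using that by blast
qed

lemma telescope:
  "ln (r (pref \<omega> n)) - ln (r []) + birkhoff f n \<omega> = (\<Sum>k<n. ee ((shift ^^ k) \<omega>) (n - Suc k))"
proof (induction n arbitrary: \<omega>)
  case 0 then show ?case by (simp add: birkhoff_def)
next
  case (Suc n)
  have b: "birkhoff f (Suc n) \<omega> = f \<omega> + birkhoff f n (shift \<omega>)"
    unfolding birkhoff_def sum.lessThan_Suc_shift by (simp add: funpow_Suc_right del: funpow.simps)
  have "(\<Sum>k<Suc n. ee ((shift ^^ k) \<omega>) (Suc n - Suc k))
      = ee \<omega> n + (\<Sum>k<n. ee ((shift ^^ k) (shift \<omega>)) (n - Suc k))"
    unfolding sum.lessThan_Suc_shift by (simp add: funpow_Suc_right del: funpow.simps)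
  also have "\<dots> = ee \<omega> n + (ln (r (pref (shift \<omega>) n)) - ln (r []) + birkhoff f n (shift \<omega>))"
    using Suc by simp
  finally show ?case unfolding b ee_def by simp
qed

lemma sum_if_less: fixes c :: real assumes "c \<ge> 0"
  shows "(\<Sum>j<n. if j < L then c else 0) \<le> real L * c"
proof -
  have "(\<Sum>j<n. if j < L then c else 0) = real (min n L) * c"
    by (induction n) (auto simp: min_def algebra_simps)
  also have "\<dots> \<le> real L * c" using assms by (intro mult_right_mono) auto
  finally show ?thesis .
qed

lemma est:
  assumes eps: "\<epsilon> > 0"
  obtains M where "M \<ge> 0" "\<And>\<omega> n. \<omega> \<in> T \<Longrightarrow>
     \<bar>ln (r (pref \<omega> n)) - ln (r []) + birkhoff f n \<omega>\<bar> \<le> real n * \<epsilon> + M"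
proof -
  obtain L where L: "\<And>\<omega> j. \<omega> \<in> T \<Longrightarrow> j \<ge> L \<Longrightarrow> \<bar>ee \<omega> j\<bar> \<le> \<epsilon>"
    using ee_small[OF eps] by blast
  obtain B where B: "B \<ge> 0" "\<And>\<omega> j. \<omega> \<in> T \<Longrightarrow> \<bar>ee \<omega> j\<bar> \<le> real (2 * j + 1) * B + B"
    using ee_bound by blast
  define B' where "B' = real (2 * L + 1) * B + B"
  have B': "B' \<ge> 0" unfolding B'_def using B by simp
  have termb: "\<bar>ee \<omega> j\<bar> \<le> \<epsilon> + (if j < L then B' else 0)" if w: "\<omega> \<in> T" for \<omega> j
  proof (cases "j < L")
    case True
    have "\<bar>ee \<omega> j\<bar> \<le> real (2 * j + 1) * B + B" using B w by blast
    also have "\<dots> \<le> B'" unfolding B'_def using True B by (intro add_right_mono mult_right_mono) auto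
    finally show ?thesis using True eps by simp
  next
    case False then show ?thesis using L w by simp
  qed
  have "\<bar>ln (r (pref \<omega> n)) - ln (r []) + birkhoff f n \<omega>\<bar> \<le> real n * \<epsilon> + real L * B'"
    if w: "\<omega> \<in> T" for \<omega> n
  proof -
    have wk: "(shift ^^ k) \<omega> \<in> T" for k
      by (induction k) (use w shiftT in auto)
    have "\<bar>ln (r (pref \<omega> n)) - ln (r []) + birkhoff f n \<omega>\<bar> \<le> (\<Sum>k<n. \<bar>ee ((shift ^^ k) \<omega>) (n - Suc k)\<bar>)"
      unfolding telescope by (rule sum_abs)
    also have "\<dots> \<le> (\<Sum>k<n. \<epsilon> + (if n - Suc k < L then B' else 0))"
      by (intro sum_mono termb wk)
    also have "\<dots> = real n * \<epsilon> + (\<Sum>k<n. if n - Suc k < L then B' else 0)"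
      by (simp add: sum.distrib)
    also have "(\<Sum>k<n. if n - Suc k < L then B' else 0) = (\<Sum>j<n. if j < L then B' else 0)"
      by (rule sum.nat_diff_reindex)
    also have "\<dots> \<le> real L * B'" by (rule sum_if_less[OF B'])
    finally show ?thesis by simp
  qed
  moreover have "real L * B' \<ge> 0" using B' by simp
  ultimately show ?thesis using that by blast
qed

end


context setting begin

definition GG :: "real \<Rightarrow> seq \<Rightarrow> real" where "GG t = (\<lambda>\<omega>. - t * f \<omega>)"

definition ZZ :: "real \<Rightarrow> nat \<Rightarrow> real" where
  "ZZ t n = (\<Sum>I\<in>words_len T n. exp (SUP \<omega>\<in>cyl T I. birkhoff (GG t) n \<omega>))"

lemma birk_scale: "birkhoff (GG t) n \<omega> = - t * birkhoff f n \<omega>"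
  unfolding birkhoff_def GG_def by (simp add: sum_distrib_left)

lemma wk: "\<omega> \<in> T \<Longrightarrow> (shift ^^ k) \<omega> \<in> T"
  by (induction k) (use shiftT in auto)

lemma birk_lin: obtains Ch where "Ch \<ge> 0" "\<And>t n \<omega>. \<omega> \<in> T \<Longrightarrow> \<bar>birkhoff (GG t) n \<omega>\<bar> \<le> \<bar>t\<bar> * (real n * Ch)"
proof -
  obtain Ch where Ch: "Ch \<ge> 0" "\<And>\<omega>. \<omega> \<in> T \<Longrightarrow> \<bar>f \<omega>\<bar> \<le> Ch" using f_bound by blast
  have "\<bar>birkhoff (GG t) n \<omega>\<bar> \<le> \<bar>t\<bar> * (real n * Ch)" if w: "\<omega> \<in> T" for t n \<omega>
  proof -
    have "\<bar>birkhoff f n \<omega>\<bar> \<le> (\<Sum>k<n. \<bar>f ((shift ^^ k) \<omega>)\<bar>)" unfolding birkhoff_def by (rule sum_abs)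
    also have "\<dots> \<le> (\<Sum>k<n. Ch)" by (intro sum_mono Ch wk w)
    finally have "\<bar>birkhoff f n \<omega>\<bar> \<le> real n * Ch" by simp
    then show ?thesis unfolding birk_scale abs_mult abs_minus by (intro mult_left_mono) auto
  qed
  then show ?thesis using that Ch by blast
qed

lemma cyl_sub: "cyl T I \<subseteq> T" unfolding cyl_def by auto

lemma bdd_cyl: "bdd_above ((\<lambda>\<omega>. birkhoff (GG t) n \<omega>) ` cyl T I)"
proof -
  obtain Ch where Ch: "Ch \<ge> 0" "\<And>t n \<omega>. \<omega> \<in> T \<Longrightarrow> \<bar>birkhoff (GG t) n \<omega>\<bar> \<le> \<bar>t\<bar> * (real n * Ch)"
    using birk_lin by blast
  show ?thesis unfolding bdd_above_def
    using Ch(2) cyl_sub by (intro exI[of _ "\<bar>t\<bar> * (real n * Ch)"]) (fastforce simp: abs_le_iff)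
qed

lemma cyl_ne: "I \<in> words_len T n \<Longrightarrow> cyl T I \<noteq> {}"
  unfolding words_len_def cyl_def by auto

lemma cyl_pref_eq: "I \<in> words_len T n \<Longrightarrow> \<omega> \<in> cyl T I \<Longrightarrow> pref \<omega> n = I"
  unfolding cyl_def using words_len_length by fastforce

lemma wl_ne: "words_len T n \<noteq> {}"
  using ne pref_words_len by blast

lemma wl_fin: "finite (words_len T n)"
  using words_len_finite[OF sub] .

lemma ZZ_pos: "ZZ t n > 0"
  unfolding ZZ_def using wl_ne wl_fin by (intro sum_pos) auto

lemma ZZ_low: obtains c where "\<And>n. ln (ZZ t n) \<ge> c * real n"
proof -
  obtain Ch where Ch: "Ch \<ge> 0" "\<And>t n \<omega>. \<omega> \<in> T \<Longrightarrow> \<bar>birkhoff (GG t) n \<omega>\<bar> \<le> \<bar>t\<bar> * (real n * Ch)"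
    using birk_lin by blast
  have "ln (ZZ t n) \<ge> - (\<bar>t\<bar> * Ch) * real n" for n
  proof -
    obtain I where I: "I \<in> words_len T n" using wl_ne by blast
    obtain \<omega> where w: "\<omega> \<in> cyl T I" using cyl_ne[OF I] by blast
    have "- (\<bar>t\<bar> * (real n * Ch)) \<le> birkhoff (GG t) n \<omega>" proof -
      have "\<omega> \<in> T" using w cyl_sub by blast
      then show ?thesis using Ch(2)[of \<omega> t n] by (auto simp: abs_le_iff)
    qed
    also have "\<dots> \<le> (SUP \<omega>\<in>cyl T I. birkhoff (GG t) n \<omega>)" using w bdd_cyl by (intro cSUP_upper)
    finally have "exp (- (\<bar>t\<bar> * (real n * Ch))) \<le> exp (SUP \<omega>\<in>cyl T I. birkhoff (GG t) n \<omega>)" by simp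
    also have "\<dots> \<le> ZZ t n" unfolding ZZ_def using I wl_fin by (intro member_le_sum) auto
    finally have "ln (exp (- (\<bar>t\<bar> * (real n * Ch)))) \<le> ln (ZZ t n)" using ZZ_pos by (subst ln_le_cancel_iff) auto
    then show ?thesis by (simp add: algebra_simps)
  qed
  then show ?thesis using that by blast
qed

lemma birk_add: "birkhoff g (n + m) \<omega> = birkhoff g n \<omega> + birkhoff g m ((shift ^^ n) \<omega>)"
proof (induction m)
  case 0 then show ?case by (simp add: birkhoff_def)
next
  case (Suc m)
  have "(shift ^^ m) ((shift ^^ n) \<omega>) = (shift ^^ (n + m)) \<omega>"
    by (simp add: funpow_add add.commute[of n m])
  then show ?case using Suc unfolding birkhoff_def by simp
qed

lemma ZZ_submult: "ZZ t (n + m) \<le> ZZ t n * ZZ t m"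
proof -
  define V where "V k I = (SUP \<omega>\<in>cyl T I. birkhoff (GG t) k \<omega>)" for k I
  define h where "h I = (take n I, drop n I)" for I :: word
  define F where "F p = exp (V n (fst p)) * exp (V m (snd p))" for p
  have hmem: "h I \<in> words_len T n \<times> words_len T m" if I: "I \<in> words_len T (n + m)" for I
  proof -
    obtain \<omega> where w: "\<omega> \<in> T" "I = pref \<omega> (n + m)" using I unfolding words_len_def by blast
    have "take n I = pref \<omega> n" using w take_pref by simp
    moreover have "drop n I = pref ((shift ^^ n) \<omega>) m" using w drop_pref by simp
    ultimately show ?thesis unfolding h_def using w wk pref_words_len by auto
  qed
  have Vle: "exp (V (n + m) I) \<le> F (h I)" if I: "I \<in> words_len T (n + m)" for I
  proof -
    have "V (n + m) I \<le> V n (take n I) + V m (drop n I)"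
      unfolding V_def
    proof (rule cSUP_least[OF cyl_ne[OF I]])
      fix \<omega> assume w: "\<omega> \<in> cyl T I"
      have wT: "\<omega> \<in> T" using w cyl_sub by blast
      have pI: "pref \<omega> (n + m) = I" using cyl_pref_eq[OF I w] .
      have 1: "take n I = pref \<omega> n" using pI take_pref by (metis le_add1)
      have 2: "drop n I = pref ((shift ^^ n) \<omega>) m" using pI drop_pref by metis
      have "birkhoff (GG t) n \<omega> \<le> (SUP \<omega>\<in>cyl T (take n I). birkhoff (GG t) n \<omega>)"
        unfolding 1 using wT cyl_pref bdd_cyl by (intro cSUP_upper) auto
      moreover have "birkhoff (GG t) m ((shift ^^ n) \<omega>) \<le> (SUP \<omega>\<in>cyl T (drop n I). birkhoff (GG t) m \<omega>)"
        unfolding 2 using wT wk cyl_pref bdd_cyl by (intro cSUP_upper) auto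
      ultimately show "birkhoff (GG t) (n + m) \<omega> \<le> (SUP \<omega>\<in>cyl T (take n I). birkhoff (GG t) n \<omega>) +
           (SUP \<omega>\<in>cyl T (drop n I). birkhoff (GG t) m \<omega>)"
        unfolding birk_add by linarith
    qed
    then have "exp (V (n + m) I) \<le> exp (V n (take n I) + V m (drop n I))" by simp
    then show ?thesis unfolding F_def h_def by (simp add: exp_add)
  qed
  have inj: "inj_on h (words_len T (n + m))"
    unfolding h_def by (rule inj_onI) (metis append_take_drop_id prod.inject)
  have "ZZ t (n + m) = (\<Sum>I\<in>words_len T (n + m). exp (V (n + m) I))"
    unfolding ZZ_def V_def by simp
  also have "\<dots> \<le> (\<Sum>I\<in>words_len T (n + m). F (h I))"
    using Vle by (intro sum_mono) auto
  also have "\<dots> = (\<Sum>p\<in>h ` words_len T (n + m). F p)"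
    using inj by (simp add: sum.reindex)
  also have "\<dots> \<le> (\<Sum>p\<in>words_len T n \<times> words_len T m. F p)"
  proof (rule sum_mono2)
    show "finite (words_len T n \<times> words_len T m)" using wl_fin by simp
    show "h ` words_len T (n + m) \<subseteq> words_len T n \<times> words_len T m" using hmem by blast
  qed (auto simp: F_def)
  also have "\<dots> = ZZ t n * ZZ t m"
    unfolding ZZ_def F_def V_def sum_product sum.cartesian_product by (simp add: case_prod_beta)
  finally show ?thesis .
qed

lemma lnZZ_sub: "ln (ZZ t (n + m)) \<le> ln (ZZ t n) + ln (ZZ t m)"
proof -
  have "ln (ZZ t (n + m)) \<le> ln (ZZ t n * ZZ t m)"
    using ZZ_submult ZZ_pos by (subst ln_le_cancel_iff) (auto intro: mult_pos_pos)
  moreover have "ZZ t n \<noteq> 0" "ZZ t m \<noteq> 0" using ZZ_pos[of t n] ZZ_pos[of t m] by auto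
  ultimately show ?thesis by (simp add: ln_mult)
qed

lemma ZZ_conv: "convergent (\<lambda>n. ln (ZZ t n) / real n)"
proof -
  obtain c where "\<And>n. ln (ZZ t n) \<ge> c * real n" using ZZ_low by blast
  then show ?thesis by (intro fekete[of _ c] lnZZ_sub) auto
qed

definition SS :: "real \<Rightarrow> nat \<Rightarrow> real" where
  "SS t n = (\<Sum>I\<in>words_len T n. r I powr t)"

lemma r0pos: "r [] > 0" using rpos nil_words by blast

lemma SS_pos: "SS t n > 0"
  unfolding SS_def using wl_ne wl_fin rpos words_len_sub by (intro sum_pos) fastforce+

lemma lnZZ_est:
  assumes eps: "\<epsilon> > 0"
  obtains M where "M \<ge> 0" "\<And>n. \<bar>ln (ZZ t n) - (ln (SS t n) - t * ln (r []))\<bar> \<le> \<bar>t\<bar> * (real n * \<epsilon> + M)"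
proof -
  obtain M where M: "M \<ge> 0" "\<And>\<omega> n. \<omega> \<in> T \<Longrightarrow>
     \<bar>ln (r (pref \<omega> n)) - ln (r []) + birkhoff f n \<omega>\<bar> \<le> real n * \<epsilon> + M"
    using est[OF eps] by blast
  have main: "\<bar>ln (ZZ t n) - (ln (SS t n) - t * ln (r []))\<bar> \<le> \<bar>t\<bar> * (real n * \<epsilon> + M)" for n
  proof -
    define \<delta> where "\<delta> = \<bar>t\<bar> * (real n * \<epsilon> + M)"
    define u where "u I = t * (ln (r I) - ln (r []))" for I
    have Vb: "u I - \<delta> \<le> (SUP \<omega>\<in>cyl T I. birkhoff (GG t) n \<omega>) \<and> (SUP \<omega>\<in>cyl T I. birkhoff (GG t) n \<omega>) \<le> u I + \<delta>"
      if I: "I \<in> words_len T n" for I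
    proof -
      have pt: "\<bar>birkhoff (GG t) n \<omega> - u I\<bar> \<le> \<delta>" if w: "\<omega> \<in> cyl T I" for \<omega>
      proof -
        have wT: "\<omega> \<in> T" using w cyl_sub by blast
        have pI: "pref \<omega> n = I" using cyl_pref_eq[OF I w] .
        have "birkhoff (GG t) n \<omega> - u I = - t * (ln (r (pref \<omega> n)) - ln (r []) + birkhoff f n \<omega>)"
          unfolding birk_scale u_def pI by (simp add: algebra_simps)
        then have "\<bar>birkhoff (GG t) n \<omega> - u I\<bar> = \<bar>t\<bar> * \<bar>ln (r (pref \<omega> n)) - ln (r []) + birkhoff f n \<omega>\<bar>"
          by (simp add: abs_mult)
        also have "\<dots> \<le> \<delta>" unfolding \<delta>_def using M(2)[OF wT] by (intro mult_left_mono) auto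
        finally show ?thesis .
      qed
      obtain \<omega>0 where w0: "\<omega>0 \<in> cyl T I" using cyl_ne[OF I] by blast
      have "u I - \<delta> \<le> birkhoff (GG t) n \<omega>0" using pt[OF w0] by (simp add: abs_le_iff)
      also have "\<dots> \<le> (SUP \<omega>\<in>cyl T I. birkhoff (GG t) n \<omega>)" using w0 bdd_cyl by (intro cSUP_upper)
      finally have 1: "u I - \<delta> \<le> (SUP \<omega>\<in>cyl T I. birkhoff (GG t) n \<omega>)" .
      have 2: "(SUP \<omega>\<in>cyl T I. birkhoff (GG t) n \<omega>) \<le> u I + \<delta>"
      proof (rule cSUP_least[OF cyl_ne[OF I]])
        fix \<omega> assume "\<omega> \<in> cyl T I"
        then have "\<bar>birkhoff (GG t) n \<omega> - u I\<bar> \<le> \<delta>" by (rule pt)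
        then show "birkhoff (GG t) n \<omega> \<le> u I + \<delta>" unfolding abs_le_iff by linarith
      qed
      show ?thesis using 1 2 by blast
    qed
    have eu: "exp (u I) = r I powr t / r [] powr t" if I: "I \<in> words_len T n" for I
    proof -
      have "r I > 0" using rpos words_len_sub I by blast
      then show ?thesis using r0pos unfolding u_def powr_def by (simp add: exp_diff algebra_simps)
    qed
    have up: "ZZ t n \<le> exp \<delta> * SS t n / r [] powr t"
    proof -
      have "ZZ t n \<le> (\<Sum>I\<in>words_len T n. exp (u I + \<delta>))"
        unfolding ZZ_def using Vb by (intro sum_mono) auto
      also have "\<dots> = (\<Sum>I\<in>words_len T n. exp \<delta> * (r I powr t / r [] powr t))"
        using eu by (intro sum.cong) (auto simp: exp_add)
      also have "\<dots> = exp \<delta> * SS t n / r [] powr t"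
        unfolding SS_def by (simp add: sum_distrib_left sum_divide_distrib)
      finally show ?thesis .
    qed
    have lo: "exp (- \<delta>) * SS t n / r [] powr t \<le> ZZ t n"
    proof -
      have "exp (- \<delta>) * SS t n / r [] powr t = (\<Sum>I\<in>words_len T n. exp (- \<delta>) * (r I powr t / r [] powr t))"
        unfolding SS_def by (simp add: sum_distrib_left sum_divide_distrib)
      also have "\<dots> = (\<Sum>I\<in>words_len T n. exp (u I - \<delta>))"
        using eu by (intro sum.cong) (auto simp: exp_diff exp_minus field_simps)
      also have "\<dots> \<le> ZZ t n"
        unfolding ZZ_def using Vb by (intro sum_mono) auto
      finally show ?thesis .
    qed
    have Sp: "SS t n > 0" by (rule SS_pos)
    have lnr: "ln (r [] powr t) = t * ln (r [])" using r0pos by (simp add: ln_powr)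
    have "ln (ZZ t n) \<le> ln (exp \<delta> * SS t n / r [] powr t)"
      using up ZZ_pos Sp r0pos by (subst ln_le_cancel_iff) auto
    also have "\<dots> = \<delta> + ln (SS t n) - t * ln (r [])"
      using Sp r0pos lnr by (simp add: ln_div ln_mult)
    finally have 1: "ln (ZZ t n) \<le> \<delta> + ln (SS t n) - t * ln (r [])" .
    have "\<delta> - \<delta> + ln (SS t n) - t * ln (r []) - \<delta> = ln (exp (- \<delta>) * SS t n / r [] powr t)"
      using Sp r0pos lnr by (simp add: ln_div ln_mult)
    also have "\<dots> \<le> ln (ZZ t n)"
      using lo ZZ_pos Sp r0pos by (subst ln_le_cancel_iff) auto
    finally have 2: "ln (SS t n) - t * ln (r []) - \<delta> \<le> ln (ZZ t n)" by simp
    show ?thesis using 1 2 unfolding \<delta>_def abs_le_iff by linarith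
  qed
  show ?thesis using that M(1) main by blast
qed

end

lemma lim_le_aux:
  fixes X :: "nat \<Rightarrow> real"
  assumes X: "X \<longlonglongrightarrow> l" and b: "\<And>n. n \<ge> 1 \<Longrightarrow> X n \<le> a + K / real n"
  shows "l \<le> a"
proof -
  have "(\<lambda>n. a + K / real n) \<longlonglongrightarrow> a + 0"
    by (intro tendsto_add tendsto_const lim_const_over_n)
  moreover have "eventually (\<lambda>n. X n \<le> a + K / real n) sequentially"
    using b unfolding eventually_sequentially by blast
  ultimately show ?thesis using X by (intro tendsto_le[OF trivial_limit_sequentially]) auto
qed

lemma lim_ge_aux:
  fixes X :: "nat \<Rightarrow> real"
  assumes X: "X \<longlonglongrightarrow> l" and b: "\<And>n. n \<ge> 1 \<Longrightarrow> X n \<ge> a - K / real n"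
  shows "l \<ge> a"
proof -
  have "(\<lambda>n. - X n) \<longlonglongrightarrow> - l" using X by (rule tendsto_minus)
  moreover have "\<And>n. n \<ge> 1 \<Longrightarrow> - X n \<le> - a + K / real n" using b by force
  ultimately have "- l \<le> - a" by (rule lim_le_aux)
  then show ?thesis by simp
qed

locale setting2 = setting +
  fixes s E :: real
  assumes Epos: "E > 0"
    and T3s: "\<forall>n. r [] powr s / E \<le> SS s n \<and> SS s n \<le> E * r [] powr s"
begin

lemma lnSS_s: "\<bar>ln (SS s n) - s * ln (r [])\<bar> \<le> \<bar>ln E\<bar>"
proof -
  have lnr: "ln (r [] powr s) = s * ln (r [])" using r0pos by (simp add: ln_powr)
  have p: "r [] powr s > 0" using r0pos by simp
  have "ln (SS s n) \<le> ln (E * r [] powr s)" using T3s SS_pos Epos p by (subst ln_le_cancel_iff) auto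
  then have 1: "ln (SS s n) \<le> ln E + s * ln (r [])" using Epos p lnr by (simp add: ln_mult)
  have "ln (r [] powr s / E) \<le> ln (SS s n)" using T3s SS_pos Epos p by (subst ln_le_cancel_iff) auto
  then have 2: "s * ln (r []) - ln E \<le> ln (SS s n)" using Epos p lnr by (simp add: ln_div)
  show ?thesis using 1 2 unfolding abs_le_iff by linarith
qed

lemma powr_cmp:
  assumes I: "I \<in> words_len T n"
  shows "t \<ge> s \<Longrightarrow> r I powr t \<le> (R ^ n * r []) powr (t - s) * r I powr s"
    and "t \<le> s \<Longrightarrow> r I powr t \<ge> (R ^ n * r []) powr (t - s) * r I powr s"
proof -
  have Iw: "I \<in> words T" using I words_len_sub by blast
  have rI: "r I > 0" using rpos Iw by blast
  have len: "length I = n" using words_len_length[OF I] .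
  have le: "r I \<le> R ^ n * r []" using rb[OF Iw] len by simp
  have split: "r I powr t = r I powr (t - s) * r I powr s" using rI by (simp add: powr_add[symmetric])
  show "t \<ge> s \<Longrightarrow> r I powr t \<le> (R ^ n * r []) powr (t - s) * r I powr s"
    unfolding split using rI le by (intro mult_right_mono powr_mono2) auto
  show "t \<le> s \<Longrightarrow> r I powr t \<ge> (R ^ n * r []) powr (t - s) * r I powr s"
    unfolding split using rI le by (intro mult_right_mono powr_mono2') auto
qed

lemma lnbig: "ln ((R ^ n * r []) powr (t - s)) = (t - s) * (real n * ln R + ln (r []))"
  using M3 r0pos by (simp add: ln_powr ln_mult ln_realpow)

lemma SS_cmp:
  shows "t \<ge> s \<Longrightarrow> ln (SS t n) \<le> (t - s) * (real n * ln R + ln (r [])) + ln (SS s n)"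
    and "t \<le> s \<Longrightarrow> ln (SS t n) \<ge> (t - s) * (real n * ln R + ln (r [])) + ln (SS s n)"
proof -
  have bp: "(R ^ n * r []) powr (t - s) > 0" using M3 r0pos by simp
  have eq: "ln ((R ^ n * r []) powr (t - s) * SS s n) = (t - s) * (real n * ln R + ln (r [])) + ln (SS s n)"
  proof -
    have "ln ((R ^ n * r []) powr (t - s) * SS s n) = ln ((R ^ n * r []) powr (t - s)) + ln (SS s n)"
      using bp SS_pos[of s n] by (intro ln_mult_pos) auto
    then show ?thesis using lnbig by simp
  qed
  have sm: "(R ^ n * r []) powr (t - s) * SS s n = (\<Sum>I\<in>words_len T n. (R ^ n * r []) powr (t - s) * r I powr s)"
    unfolding SS_def by (simp add: sum_distrib_left)
  show "t \<ge> s \<Longrightarrow> ln (SS t n) \<le> (t - s) * (real n * ln R + ln (r [])) + ln (SS s n)"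
  proof -
    assume ts: "t \<ge> s"
    have "SS t n \<le> (\<Sum>I\<in>words_len T n. (R ^ n * r []) powr (t - s) * r I powr s)"
      unfolding SS_def using powr_cmp(1) ts by (intro sum_mono) auto
    then have "SS t n \<le> (R ^ n * r []) powr (t - s) * SS s n" using sm by simp
    then have "ln (SS t n) \<le> ln ((R ^ n * r []) powr (t - s) * SS s n)"
      using SS_pos bp by (subst ln_le_cancel_iff) auto
    then show ?thesis using eq by simp
  qed
  show "t \<le> s \<Longrightarrow> ln (SS t n) \<ge> (t - s) * (real n * ln R + ln (r [])) + ln (SS s n)"
  proof -
    assume ts: "t \<le> s"
    have "SS t n \<ge> (\<Sum>I\<in>words_len T n. (R ^ n * r []) powr (t - s) * r I powr s)"
      unfolding SS_def using powr_cmp(2) ts by (intro sum_mono) auto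
    then have "SS t n \<ge> (R ^ n * r []) powr (t - s) * SS s n" using sm by simp
    then have "ln (SS t n) \<ge> ln ((R ^ n * r []) powr (t - s) * SS s n)"
      using SS_pos bp by (subst ln_le_cancel_iff) auto
    then show ?thesis using eq by simp
  qed
qed

lemma ZZ_bounds:
  assumes eps: "\<epsilon> > 0"
  obtains M where "M \<ge> 0"
    "\<And>n. t \<ge> s \<Longrightarrow> ln (ZZ t n) \<le> (t - s) * ln R * real n + \<bar>ln E\<bar> + \<bar>t\<bar> * (real n * \<epsilon> + M)"
    "\<And>n. t \<le> s \<Longrightarrow> ln (ZZ t n) \<ge> (t - s) * ln R * real n - \<bar>ln E\<bar> - \<bar>t\<bar> * (real n * \<epsilon> + M)"
proof -
  obtain M where M: "M \<ge> 0" "\<And>n. \<bar>ln (ZZ t n) - (ln (SS t n) - t * ln (r []))\<bar> \<le> \<bar>t\<bar> * (real n * \<epsilon> + M)"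
    using lnZZ_est[OF eps] by blast
  have 1: "ln (ZZ t n) \<le> (t - s) * ln R * real n + \<bar>ln E\<bar> + \<bar>t\<bar> * (real n * \<epsilon> + M)" if ts: "t \<ge> s" for n
    using M(2)[of n] SS_cmp(1)[OF ts, of n] lnSS_s[of n] unfolding abs_le_iff by (simp add: algebra_simps)
  have 2: "ln (ZZ t n) \<ge> (t - s) * ln R * real n - \<bar>ln E\<bar> - \<bar>t\<bar> * (real n * \<epsilon> + M)" if ts: "t \<le> s" for n
    using M(2)[of n] SS_cmp(2)[OF ts, of n] lnSS_s[of n] unfolding abs_le_iff by (simp add: algebra_simps)
  show ?thesis using that M(1) 1 2 by blast
qed

lemma lim_upper:
  assumes ts: "t \<ge> s"
  shows "lim (\<lambda>n. ln (ZZ t n) / real n) \<le> (t - s) * ln R"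
proof -
  define X where "X = (\<lambda>n. ln (ZZ t n) / real n)"
  have X: "X \<longlonglongrightarrow> lim X" using ZZ_conv unfolding X_def by (simp add: convergent_LIMSEQ_iff)
  have "lim X \<le> (t - s) * ln R + e" if e: "e > 0" for e
  proof -
    define \<epsilon> where "\<epsilon> = e / (\<bar>t\<bar> + 1)"
    have eps: "\<epsilon> > 0" unfolding \<epsilon>_def using e by (simp add: add_pos_nonneg)
    have te: "\<bar>t\<bar> * \<epsilon> \<le> e" unfolding \<epsilon>_def using e by (simp add: field_simps)
    obtain M where M: "M \<ge> 0"
      "\<And>n. t \<ge> s \<Longrightarrow> ln (ZZ t n) \<le> (t - s) * ln R * real n + \<bar>ln E\<bar> + \<bar>t\<bar> * (real n * \<epsilon> + M)"
      using ZZ_bounds[OF eps] by blast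
    have "X n \<le> ((t - s) * ln R + \<bar>t\<bar> * \<epsilon>) + (\<bar>ln E\<bar> + \<bar>t\<bar> * M) / real n" if n: "n \<ge> 1" for n
    proof -
      have np: "real n > 0" using n by simp
      have "ln (ZZ t n) \<le> real n * ((t - s) * ln R + \<bar>t\<bar> * \<epsilon>) + (\<bar>ln E\<bar> + \<bar>t\<bar> * M)"
        using M(2)[OF ts, of n] by (simp add: algebra_simps)
      then show ?thesis unfolding X_def using np by (simp add: field_simps)
    qed
    then have "lim X \<le> (t - s) * ln R + \<bar>t\<bar> * \<epsilon>" by (rule lim_le_aux[OF X])
    then show ?thesis using te by linarith
  qed
  then have "lim X \<le> (t - s) * ln R" by (rule field_le_epsilon)
  then show ?thesis unfolding X_def .
qed

lemma lim_lower:
  assumes ts: "t \<le> s"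
  shows "lim (\<lambda>n. ln (ZZ t n) / real n) \<ge> (t - s) * ln R"
proof -
  define X where "X = (\<lambda>n. ln (ZZ t n) / real n)"
  have X: "X \<longlonglongrightarrow> lim X" using ZZ_conv unfolding X_def by (simp add: convergent_LIMSEQ_iff)
  have "(t - s) * ln R \<le> lim X + e" if e: "e > 0" for e
  proof -
    define \<epsilon> where "\<epsilon> = e / (\<bar>t\<bar> + 1)"
    have eps: "\<epsilon> > 0" unfolding \<epsilon>_def using e by (simp add: add_pos_nonneg)
    have te: "\<bar>t\<bar> * \<epsilon> \<le> e" unfolding \<epsilon>_def using e by (simp add: field_simps)
    obtain M where M: "M \<ge> 0"
      "\<And>n. t \<le> s \<Longrightarrow> ln (ZZ t n) \<ge> (t - s) * ln R * real n - \<bar>ln E\<bar> - \<bar>t\<bar> * (real n * \<epsilon> + M)"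
      using ZZ_bounds[OF eps] by blast
    have "X n \<ge> ((t - s) * ln R - \<bar>t\<bar> * \<epsilon>) - (\<bar>ln E\<bar> + \<bar>t\<bar> * M) / real n" if n: "n \<ge> 1" for n
    proof -
      have np: "real n > 0" using n by simp
      have "ln (ZZ t n) \<ge> real n * ((t - s) * ln R - \<bar>t\<bar> * \<epsilon>) - (\<bar>ln E\<bar> + \<bar>t\<bar> * M)"
        using M(2)[OF ts, of n] by (simp add: algebra_simps)
      then have "(real n * ((t - s) * ln R - \<bar>t\<bar> * \<epsilon>) - (\<bar>ln E\<bar> + \<bar>t\<bar> * M)) / real n \<le> ln (ZZ t n) / real n"
        using np by (intro divide_right_mono) auto
      moreover have "(real n * ((t - s) * ln R - \<bar>t\<bar> * \<epsilon>) - (\<bar>ln E\<bar> + \<bar>t\<bar> * M)) / real n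
          = ((t - s) * ln R - \<bar>t\<bar> * \<epsilon>) - (\<bar>ln E\<bar> + \<bar>t\<bar> * M) / real n"
        using np by (simp add: diff_divide_distrib)
      ultimately show ?thesis unfolding X_def by simp
    qed
    then have "lim X \<ge> (t - s) * ln R - \<bar>t\<bar> * \<epsilon>" by (rule lim_ge_aux[OF X])
    then show ?thesis using te by linarith
  qed
  then have "(t - s) * ln R \<le> lim X" by (rule field_le_epsilon)
  then show ?thesis unfolding X_def .
qed

lemma pressure_eq: "pressure T (\<lambda>\<omega>. - t * f \<omega>) = lim (\<lambda>n. ln (ZZ t n) / real n)"
  unfolding pressure_def ZZ_def GG_def ..

theorem final: "pressure T (\<lambda>\<omega>. - s * f \<omega>) = 0
         \<and> (\<forall>t. pressure T (\<lambda>\<omega>. - t * f \<omega>) = 0 \<longrightarrow> t = s)"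
proof
  show "pressure T (\<lambda>\<omega>. - s * f \<omega>) = 0"
    using lim_upper[of s] lim_lower[of s] unfolding pressure_eq by simp
  have lnR: "ln R < 0" using M3 by simp
  show "\<forall>t. pressure T (\<lambda>\<omega>. - t * f \<omega>) = 0 \<longrightarrow> t = s"
  proof (intro allI impI)
    fix t assume p: "pressure T (\<lambda>\<omega>. - t * f \<omega>) = 0"
    show "t = s"
    proof (rule ccontr)
      assume "t \<noteq> s"
      then consider "t > s" | "t < s" by linarith
      then show False
      proof cases
        case 1
        have "(t - s) * ln R < 0" using 1 lnR by (simp add: mult_pos_neg)
        then show False using lim_upper[of t] 1 p unfolding pressure_eq by simp
      next
        case 2
        have "(t - s) * ln R > 0" using 2 lnR by (simp add: mult_neg_neg)
        then show False using lim_lower[of t] 2 p unfolding pressure_eq by simp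
      qed
    qed
  qed
qed

end

lemma mpow_left:
  assumes i: "i < N" shows "j < N \<Longrightarrow> mpow N A (Suc k) i j = (\<Sum>l<N. A i l * mpow N A k l j)"
proof (induction k arbitrary: j)
  case 0
  have "mpow N A (Suc 0) i j = (\<Sum>l<N. (if i = l then 1 else 0) * A l j)" by simp
  also have "\<dots> = (\<Sum>l<N. if i = l then A l j else 0)" by (intro sum.cong) auto
  also have "\<dots> = A i j" using i by (simp add: sum.delta)
  also have "\<dots> = (\<Sum>l<N. if l = j then A i l else 0)" using 0 by (simp add: sum.delta')
  also have "\<dots> = (\<Sum>l<N. A i l * (if l = j then 1 else 0))" by (intro sum.cong) auto
  finally show ?case by simp
next
  case (Suc k)
  have "mpow N A (Suc (Suc k)) i j = (\<Sum>l<N. mpow N A (Suc k) i l * A l j)" by simp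
  also have "\<dots> = (\<Sum>l<N. (\<Sum>m<N. A i m * mpow N A k m l) * A l j)"
    using Suc.IH by (intro sum.cong) auto
  also have "\<dots> = (\<Sum>l<N. \<Sum>m<N. A i m * (mpow N A k m l * A l j))"
    by (simp add: sum_distrib_right mult.assoc)
  also have "\<dots> = (\<Sum>m<N. \<Sum>l<N. A i m * (mpow N A k m l * A l j))"
    by (rule sum.swap)
  also have "\<dots> = (\<Sum>m<N. A i m * (\<Sum>l<N. mpow N A k m l * A l j))"
    by (simp add: sum_distrib_left)
  also have "\<dots> = (\<Sum>m<N. A i m * mpow N A (Suc k) m j)" by simp
  finally show ?case .
qed

lemma T_nonempty:
  assumes N: "0 < N" and A01: "\<forall>i<N. \<forall>j<N. A i j \<in> {0, 1}" and irr: "irreducible_mat N A"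
  shows "{\<omega> \<in> Sigma_N N. \<forall>n. A (\<omega> n) (\<omega> (Suc n)) = 1} \<noteq> {}"
proof -
  have succ: "\<exists>l. l < N \<and> A i l = 1" if i: "i < N" for i
  proof -
    obtain k where k: "k > 0" "mpow N A k i 0 > 0" using irr i N unfolding irreducible_mat_def by blast
    then obtain k' where k': "k = Suc k'" by (cases k) auto
    have "(\<Sum>l<N. A i l * mpow N A k' l 0) > 0" using k mpow_left[OF i N, of A k'] k' by simp
    then obtain l where l: "l < N" "A i l * mpow N A k' l 0 \<noteq> 0"
      by (metis (no_types, lifting) lessThan_iff less_irrefl sum.neutral)
    then have "A i l \<noteq> 0" by auto
    moreover have "A i l \<in> {0, 1}" using A01 i l(1) by blast
    ultimately have "A i l = 1" by auto
    then show ?thesis using l by blast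
  qed
  define nx where "nx i = (SOME l. l < N \<and> A i l = 1)" for i
  have nx: "nx i < N \<and> A i (nx i) = 1" if "i < N" for i
    unfolding nx_def using someI_ex[OF succ[OF that]] .
  define \<omega> where "\<omega> n = (nx ^^ n) 0" for n
  have lt: "\<omega> n < N" for n unfolding \<omega>_def by (induction n) (use N nx in auto)
  have "\<omega> \<in> {\<omega> \<in> Sigma_N N. \<forall>n. A (\<omega> n) (\<omega> (Suc n)) = 1}"
    using lt nx unfolding Sigma_N_def \<omega>_def by auto
  then show ?thesis by blast
qed

theorem mainTheorem9:
  fixes N :: nat and T :: "seq set" and A :: "nat \<Rightarrow> nat \<Rightarrow> nat"
    and x :: "word \<Rightarrow> 'a::complete_space" and r :: "word \<Rightarrow> real"
    and s \<rho>0 C D E G R W \<delta>0 \<xi> :: real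
    and \<phi> :: "nat \<Rightarrow> 'a \<Rightarrow> 'a" and \<rho> :: "seq \<Rightarrow> real"
  defines "K \<equiv> Kset T x []"
  defines "kp \<equiv> kap_plus \<phi> r (nbhd K (G * \<xi>))"
  defines "km \<equiv> kap_minus \<phi> r (nbhd K (G * \<xi>))"
  defines "f \<equiv> (\<lambda>\<omega>. ln (1 / \<rho> \<omega>))"
  assumes N2: "N \<ge> 2"
    and doubl: "doubling (UNIV :: 'a set)"
    and G0: "G \<ge> 0"
    and rpos: "\<forall>I\<in>words T. r I > 0"
    and cpos: "\<rho>0 > 0" "C > 0" "D > 0" "E > 0"
    and T1: "\<forall>I\<in>words T. \<forall>J\<in>words T. \<not> prefix I J \<and> \<not> prefix J I
               \<longrightarrow> dist (x I) (x J) \<ge> C * (r I + r J)"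
    and T2: "\<forall>I\<in>words T. \<forall>J J'. I @ J \<in> words T \<and> I @ J' \<in> words T
               \<longrightarrow> dist (x (I @ J)) (x (I @ J')) \<le> D * r I"
    and T'3: "\<forall>I\<in>words T. \<forall>n. \<forall>\<I>. \<I> \<subseteq> (\<Union>k\<in>{n..}. words_len T k)
               \<and> (\<forall>\<omega>\<in>T. \<exists>!J. J \<in> \<I> \<and> pref \<omega> (length J) = J)
               \<and> (\<exists>J\<in>\<I>. prefix I J)
               \<longrightarrow> r I powr s / E \<le> (\<Sum>K\<in>{K\<in>\<I>. prefix I K}. r K powr s)
                 \<and> (\<Sum>K\<in>{K\<in>\<I>. prefix I K}. r K powr s) \<le> E * r I powr s"
    and T4: "\<forall>e>0. \<exists>m. \<forall>I\<in>words T. length I \<ge> m \<longrightarrow> r I < e"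
    and T5: "\<forall>I j. I @ [j] \<in> words T \<longrightarrow> r (I @ [j]) \<ge> \<rho>0 * r I"
    and M1: "\<forall>i<N. \<forall>j<N. A i j \<in> {0, 1}" "irreducible_mat N A" "aperiodic_mat N A"
            "T = {\<omega> \<in> Sigma_N N. \<forall>n. A (\<omega> n) (\<omega> (Suc n)) = 1}"
    and M2: "x ` words T \<subseteq> K"
    and M3: "0 < R" "R < 1" "\<forall>I i. I @ [i] \<in> words T \<longrightarrow> r (I @ [i]) \<le> R * r I"
    and M4: "\<forall>i<N. bilipschitz (\<phi> i)" "W > 0" "\<delta>0 > 0"
            "\<forall>I J. I @ J \<in> words T \<longrightarrow> phiw \<phi> I ` Kset T x J = Kset T x (I @ J)"
            "\<forall>I\<in>words T. \<forall>\<delta>. 0 < \<delta> \<and> \<delta> \<le> \<delta>0 \<longrightarrow>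
               nbhd (Kset T x I) (r I * W * G * \<delta>) \<subseteq> phiw \<phi> I ` nbhd K (G * \<delta>)"
    and M5: "0 < \<xi>" "\<xi> < \<delta>0"
            "\<forall>e>0. \<exists>m. \<forall>I J. I @ J \<in> words T \<and> length J \<ge> m
               \<longrightarrow> \<bar>kapW kp I J - 1\<bar> < e \<and> \<bar>kapW km I J - 1\<bar> < e"
    and M6: "\<forall>i \<omega>. seqcons i \<omega> \<in> T \<longrightarrow>
               (\<lambda>n. r (i # pref \<omega> n) / r (pref \<omega> n)) \<longlonglongrightarrow> \<rho> (seqcons i \<omega>)
               \<and> 0 < \<rho> (seqcons i \<omega>) \<and> \<rho> (seqcons i \<omega>) < 1"
            "cont_T T \<rho>"
            "\<exists>g1 g2. holder_on (T \<union> emb N ` words T) g1 \<and> holder_on (T \<union> emb N ` words T) g2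
               \<and> (\<forall>I\<in>words T. g1 (emb N I) = fword kp r I \<and> g2 (emb N I) = fword km r I)
               \<and> (\<forall>\<omega>\<in>T. g1 \<omega> = f \<omega> \<and> g2 \<omega> = f \<omega>)"
    and M7: "\<not> lattice_fun T f"
  shows "pressure T (\<lambda>\<omega>. - s * f \<omega>) = 0
         \<and> (\<forall>t. pressure T (\<lambda>\<omega>. - t * f \<omega>) = 0 \<longrightarrow> t = s)"
proof -
  have sub: "T \<subseteq> Sigma_N N" by (subst M1(4)) blast
  have shiftT: "\<forall>\<omega>\<in>T. shift \<omega> \<in> T"
  proof
    fix \<omega> assume "\<omega> \<in> T"
    then have w: "\<omega> \<in> Sigma_N N" "\<forall>n. A (\<omega> n) (\<omega> (Suc n)) = 1" by (subst (asm) M1(4); simp)+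
    show "shift \<omega> \<in> T" by (subst M1(4)) (use w in \<open>auto simp: Sigma_N_def shift_def\<close>)
  qed
  have ne: "T \<noteq> {}" by (subst M1(4)) (rule T_nonempty[OF _ M1(1) M1(2)], use N2 in simp)
  obtain g1 g2 where gg: "holder_on (T \<union> emb N ` words T) g1 \<and> holder_on (T \<union> emb N ` words T) g2
               \<and> (\<forall>I\<in>words T. g1 (emb N I) = fword kp r I \<and> g2 (emb N I) = fword km r I)
               \<and> (\<forall>\<omega>\<in>T. g1 \<omega> = f \<omega> \<and> g2 \<omega> = f \<omega>)"
    using M6(3) by (elim exE) (rule that)
  have g: "holder_on (T \<union> emb N ` words T) g1"
     "\<forall>I\<in>words T. g1 (emb N I) = fword kp r I" "\<forall>\<omega>\<in>T. g1 \<omega> = f \<omega>"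
    using gg by simp_all
  have M5': "\<forall>e>0. \<exists>m. \<forall>I J. I @ J \<in> words T \<and> length J \<ge> m \<longrightarrow> \<bar>kapW kp I J - 1\<bar> < e"
  proof (intro allI impI)
    fix e :: real assume e: "e > 0"
    obtain m where m: "\<forall>I J. I @ J \<in> words T \<and> length J \<ge> m
               \<longrightarrow> \<bar>kapW kp I J - 1\<bar> < e \<and> \<bar>kapW km I J - 1\<bar> < e"
      using M5(3)[rule_format, OF e] by (elim exE) (rule that)
    have "\<forall>I J. I @ J \<in> words T \<and> length J \<ge> m \<longrightarrow> \<bar>kapW kp I J - 1\<bar> < e"
      using m by simp
    then show "\<exists>m. \<forall>I J. I @ J \<in> words T \<and> length J \<ge> m \<longrightarrow> \<bar>kapW kp I J - 1\<bar> < e"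
      by (rule exI)
  qed
  interpret st: setting T N r \<rho>0 R f kp g1
    by (rule setting.intro[OF sub shiftT ne rpos T5 M3(1) M3(2) M3(3) cpos(1) g(1) g(2) g(3) M5'])
  have nilw: "[] \<in> words T" by (rule st.nil_words)
  have T3s: "\<forall>n. r [] powr s / E \<le> st.SS s n \<and> st.SS s n \<le> E * r [] powr s"
  proof
    fix n
    have c1: "words_len T n \<subseteq> (\<Union>k\<in>{n..}. words_len T k)" by auto
    have c2: "\<forall>\<omega>\<in>T. \<exists>!J. J \<in> words_len T n \<and> pref \<omega> (length J) = J"
    proof
      fix \<omega> assume w: "\<omega> \<in> T"
      show "\<exists>!J. J \<in> words_len T n \<and> pref \<omega> (length J) = J"
      proof (rule ex1I[of _ "pref \<omega> n"])
        show "pref \<omega> n \<in> words_len T n \<and> pref \<omega> (length (pref \<omega> n)) = pref \<omega> n"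
          using w pref_words_len by auto
        fix J assume "J \<in> words_len T n \<and> pref \<omega> (length J) = J"
        then show "J = pref \<omega> n" using words_len_length by metis
      qed
    qed
    have c3: "\<exists>J\<in>words_len T n. prefix [] J" using st.wl_ne by auto
    have "r [] powr s / E \<le> (\<Sum>K\<in>{K\<in>words_len T n. prefix [] K}. r K powr s)
                 \<and> (\<Sum>K\<in>{K\<in>words_len T n. prefix [] K}. r K powr s) \<le> E * r [] powr s"
    proof -
      have H: "\<forall>n \<I>. \<I> \<subseteq> (\<Union>k\<in>{n..}. words_len T k)
               \<and> (\<forall>\<omega>\<in>T. \<exists>!J. J \<in> \<I> \<and> pref \<omega> (length J) = J)
               \<and> (\<exists>J\<in>\<I>. prefix [] J)
               \<longrightarrow> r [] powr s / E \<le> (\<Sum>K\<in>{K\<in>\<I>. prefix [] K}. r K powr s)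
                 \<and> (\<Sum>K\<in>{K\<in>\<I>. prefix [] K}. r K powr s) \<le> E * r [] powr s"
        by (rule bspec[OF T'3 nilw])
      have "words_len T n \<subseteq> (\<Union>k\<in>{n..}. words_len T k)
               \<and> (\<forall>\<omega>\<in>T. \<exists>!J. J \<in> words_len T n \<and> pref \<omega> (length J) = J)
               \<and> (\<exists>J\<in>words_len T n. prefix [] J)
               \<longrightarrow> r [] powr s / E \<le> (\<Sum>K\<in>{K\<in>words_len T n. prefix [] K}. r K powr s)
                 \<and> (\<Sum>K\<in>{K\<in>words_len T n. prefix [] K}. r K powr s) \<le> E * r [] powr s"
        by (rule H[THEN spec[of _ n], THEN spec[of _ "words_len T n"]])
      then show ?thesis using conjI[OF c1 conjI[OF c2 c3]] by (rule mp)
    qed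
    then show "r [] powr s / E \<le> st.SS s n \<and> st.SS s n \<le> E * r [] powr s"
      unfolding st.SS_def by simp
  qed
  have S2: "setting2 T N r \<rho>0 R f kp g1 s E"
    by (rule setting2.intro[OF st.setting_axioms setting2_axioms.intro[OF cpos(4) T3s]])
  show ?thesis by (rule setting2.final[OF S2])
qed

end
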